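(* Let $N\ge2$ be an integer and let $\sigma$ be a finite set of functions $\mathbb{Z}_2\to\mathbb{Z}_N$ that is totally indistinguishable. Let $G(\sigma)$ be the simple undirected graph whose vertex set is $\sigma$, in which two distinct functions $f,g\in\sigma$ are adjacent iff $f(0)=g(0)$ or $f(1)=g(1)$. Then every connected component of $G(\sigma)$ contains an induced subgraph which is a cycle of even length at least $4$.
   Context: A set $\sigma$ of functions $\mathbb{Z}_M\to\mathbb{Z}_N$ is totally indistinguishable if for every $x\in\mathbb{Z}_M$ and every $f\in\sigma$ there exists $f'\in\sigma$ with $f'\neq f$ and $f'(x)=f(x)$. *)

theory Defs
  imports "HOL-Library.FuncSet"
begin

text \<open>Functions Z_2 -> Z_N are modelled as extensional functions
  in PiE {0..<2} (%_. {0..<N}) (values outside the domain are undefined).\<close>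

definition zfuns :: "nat \<Rightarrow> nat \<Rightarrow> (nat \<Rightarrow> nat) set" where
  "zfuns M N = {0..<M} \<rightarrow>\<^sub>E {0..<N}"

definition totally_indistinguishable :: "nat \<Rightarrow> (nat \<Rightarrow> nat) set \<Rightarrow> bool" where
  "totally_indistinguishable M \<sigma> \<longleftrightarrow>
     (\<forall>x\<in>{0..<M}. \<forall>f\<in>\<sigma>. \<exists>f'\<in>\<sigma>. f' \<noteq> f \<and> f' x = f x)"

definition G_adj :: "(nat \<Rightarrow> nat) set \<Rightarrow> (nat \<Rightarrow> nat) \<Rightarrow> (nat \<Rightarrow> nat) \<Rightarrow> bool" where
  "G_adj \<sigma> f g \<longleftrightarrow> f \<in> \<sigma> \<and> g \<in> \<sigma> \<and> f \<noteq> g \<and> (f 0 = g 0 \<or> f 1 = g 1)"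

definition G_component :: "(nat \<Rightarrow> nat) set \<Rightarrow> (nat \<Rightarrow> nat) \<Rightarrow> (nat \<Rightarrow> nat) set" where
  "G_component \<sigma> v = {u. (G_adj \<sigma>)\<^sup>*\<^sup>* v u}"

definition G_induced_cycle :: "(nat \<Rightarrow> nat) set \<Rightarrow> (nat \<Rightarrow> nat) list \<Rightarrow> bool" where
  "G_induced_cycle \<sigma> cs \<longleftrightarrow> length cs \<ge> 3 \<and> distinct cs \<and> set cs \<subseteq> \<sigma> \<and>
     (\<forall>i<length cs. \<forall>j<length cs.
        G_adj \<sigma> (cs ! i) (cs ! j) \<longleftrightarrow>
          (j = Suc i mod length cs \<or> i = Suc j mod length cs))"

end

theory Submission
  imports Defs
begin

definition Bv :: "(nat \<Rightarrow> nat) \<Rightarrow> (nat \<times> nat) set" where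
  "Bv f = {(0, f 0), (1, f 1)}"

definition lnk :: "(nat \<Rightarrow> nat) set \<Rightarrow> nat \<times> nat \<Rightarrow> nat \<times> nat \<Rightarrow> bool" where
  "lnk \<sigma> u w \<longleftrightarrow> (\<exists>f\<in>\<sigma>. Bv f = {u, w})"

definition pth :: "(nat \<Rightarrow> nat) set \<Rightarrow> (nat \<Rightarrow> nat) \<Rightarrow> (nat \<times> nat) list \<Rightarrow> bool" where
  "pth \<sigma> v ws \<longleftrightarrow> distinct ws \<and> ws \<noteq> [] \<and> last ws = (0, v 0) \<and>
     set ws \<subseteq> (\<Union>f\<in>\<sigma>. Bv f) \<and> (\<forall>i. Suc i < length ws \<longrightarrow> lnk \<sigma> (ws!i) (ws!Suc i))"

lemma adj_iff: "G_adj \<sigma> f g \<longleftrightarrow> f \<in> \<sigma> \<and> g \<in> \<sigma> \<and> f \<noteq> g \<and> Bv f \<inter> Bv g \<noteq> {}"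
  by (auto simp: G_adj_def Bv_def)

lemma fst_sum: "{(0::nat, x), (1, y)} = {a, b} \<Longrightarrow> fst a + fst b = 1"
  by (auto simp: doubleton_eq_iff)

lemma smod: "i < (n::nat) \<Longrightarrow> Suc i mod n = (if Suc i = n then 0 else Suc i)"
  by auto

lemma mod_arith1:
  fixes i j n :: nat
  assumes "i < n" "j < n" "n \<ge> 3" "i = Suc j mod n" "j = Suc i mod n"
  shows False
proof -
  have A: "i = (if Suc j = n then 0 else Suc j)" using assms(4) smod[OF assms(2)] by simp
  have B: "j = (if Suc i = n then 0 else Suc i)" using assms(5) smod[OF assms(1)] by simp
  show False
  proof (cases "Suc j = n")
    case True
    then have "i = 0" using A by (simp only: if_True refl)
    then have H: "j = (if Suc 0 = n then 0 else Suc 0)" using B by (simp only:)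
    have "Suc 0 \<noteq> n" using assms(3) by linarith
    then have "j = Suc 0" using H by (simp only: if_False)
    then show False using True assms(3) by linarith
  next
    case False
    then have "i = Suc j" using A by (simp only: if_False)
    then have H: "j = (if Suc (Suc j) = n then 0 else Suc (Suc j))" using B by (simp only:)
    show False
    proof (cases "Suc (Suc j) = n")
      case True
      then have "j = 0" using H by (simp only: if_True refl)
      then show False using True assms(3) by linarith
    next
      case False
      then have "j = Suc (Suc j)" using H by (simp only: if_False)
      then show False by linarith
    qed
  qed
qed

lemma mod_arith2:
  fixes i j n :: nat
  assumes "i < n" "j < n" "Suc i mod n = Suc j mod n"
  shows "i = j"
  using assms(3) smod[OF assms(1)] smod[OF assms(2)] assms(1,2) by (auto split: if_splits)

lemma mod_arith3:
  fixes i n :: nat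
  assumes "i < n" "n \<ge> 2"
  shows "Suc i mod n \<noteq> i"
  using smod[OF assms(1)] assms by auto

lemma cyc:
  assumes sd: "distinct s" and sl: "length s \<ge> 3" and len: "length cs = length s"
    and memb: "set cs \<subseteq> \<sigma>"
    and bv: "\<forall>i<length s. Bv (cs!i) = {s!i, s!(Suc i mod length s)}"
  shows "G_induced_cycle \<sigma> cs \<and> even (length cs)"
proof -
  define n where "n = length s"
  have n3: "n \<ge> 3" using sl n_def by simp
  have seq: "\<And>a b. a < n \<Longrightarrow> b < n \<Longrightarrow> s!a = s!b \<longleftrightarrow> a = b"
    using sd n_def by (simp add: nth_eq_iff_index_eq)
  have bvi: "\<And>i. i < n \<Longrightarrow> Bv (cs!i) = {s!i, s!(Suc i mod n)}" using bv n_def by simp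
  have ltn: "\<And>i. Suc i mod n < n" using n3 by simp
  have cin: "\<And>i. i < n \<Longrightarrow> cs!i \<in> \<sigma>" using memb len n_def by auto
  have dist: "\<And>i j. i < n \<Longrightarrow> j < n \<Longrightarrow> cs!i = cs!j \<Longrightarrow> i = j"
  proof -
    fix i j assume ij: "i < n" "j < n" "cs!i = cs!j"
    then have E: "{s!i, s!(Suc i mod n)} = {s!j, s!(Suc j mod n)}" using bvi by metis
    show "i = j"
    proof (rule ccontr)
      assume ne: "i \<noteq> j"
      have "s!i \<in> {s!j, s!(Suc j mod n)}" using E by blast
      then have "s!i = s!(Suc j mod n)" using ne seq ij by auto
      then have a: "i = Suc j mod n" using seq ij ltn by blast
      have "s!j \<in> {s!i, s!(Suc i mod n)}" using E by blast
      then have "s!j = s!(Suc i mod n)" using ne seq ij by auto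
      then have b: "j = Suc i mod n" using seq ij ltn by blast
      show False using mod_arith1[OF ij(1,2) n3 a b] .
    qed
  qed
  have dcs: "distinct cs" unfolding distinct_conv_nth using dist len n_def by auto
  have adj: "\<And>i j. i < n \<Longrightarrow> j < n \<Longrightarrow>
      G_adj \<sigma> (cs ! i) (cs ! j) \<longleftrightarrow> (j = Suc i mod n \<or> i = Suc j mod n)"
  proof -
    fix i j assume ij: "i < n" "j < n"
    show "G_adj \<sigma> (cs ! i) (cs ! j) \<longleftrightarrow> (j = Suc i mod n \<or> i = Suc j mod n)"
    proof
      assume "G_adj \<sigma> (cs ! i) (cs ! j)"
      then have ne: "i \<noteq> j" and sh: "{s!i, s!(Suc i mod n)} \<inter> {s!j, s!(Suc j mod n)} \<noteq> {}"
        using adj_iff bvi ij by auto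
      from sh have "s!i = s!j \<or> s!i = s!(Suc j mod n) \<or> s!(Suc i mod n) = s!j
          \<or> s!(Suc i mod n) = s!(Suc j mod n)" by blast
      then show "j = Suc i mod n \<or> i = Suc j mod n"
        using seq ij ltn ne mod_arith2[OF ij] by metis
    next
      assume h: "j = Suc i mod n \<or> i = Suc j mod n"
      have "i \<noteq> j"
      proof
        assume "i = j"
        then have "i = Suc i mod n" using h by auto
        then show False using mod_arith3[OF ij(1)] n3 by simp
      qed
      then have "cs!i \<noteq> cs!j" using dist ij by blast
      moreover have "Bv (cs!i) \<inter> Bv (cs!j) \<noteq> {}"
      proof (cases "j = Suc i mod n")
        case True
        then have "s!j \<in> Bv (cs!i)" using bvi[OF ij(1)] by simp
        moreover have "s!j \<in> Bv (cs!j)" using bvi[OF ij(2)] by simp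
        ultimately show ?thesis by blast
      next
        case False
        then have "i = Suc j mod n" using h by blast
        then have "s!i \<in> Bv (cs!j)" using bvi[OF ij(2)] by simp
        moreover have "s!i \<in> Bv (cs!i)" using bvi[OF ij(1)] by simp
        ultimately show ?thesis by blast
      qed
      ultimately show "G_adj \<sigma> (cs ! i) (cs ! j)" using adj_iff cin ij by blast
    qed
  qed
  have ind: "G_induced_cycle \<sigma> cs"
    unfolding G_induced_cycle_def using len n_def n3 dcs memb adj by auto
  have fs: "\<And>i. i < n \<Longrightarrow> fst (s!i) + fst (s!(Suc i mod n)) = 1"
    using bvi fst_sum unfolding Bv_def by metis
  define a where "a = fst (s!0)"
  have a1: "a \<le> 1" using fs[of 0] n3 a_def by simp
  have par: "\<And>i. i < n \<Longrightarrow> fst (s!i) = (if even i then a else 1 - a)"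
  proof -
    fix i show "i < n \<Longrightarrow> fst (s!i) = (if even i then a else 1 - a)"
    proof (induction i)
      case 0 then show ?case using a_def by simp
    next
      case (Suc i)
      then have "fst (s!i) + fst (s!(Suc i)) = 1" using fs[of i] by simp
      then show ?case using Suc a1 by auto
    qed
  qed
  have "fst (s!(n-1)) + fst (s!0) = 1" using fs[of "n-1"] n3 by simp
  then have "odd (n - 1)" using par[of "n-1"] n3 a_def a1 by (auto split: if_splits; presburger)
  then have "even n" using n3 by simp
  then show ?thesis using ind len n_def by simp
qed

lemma bv_inj:
  assumes "f \<in> zfuns 2 N" "g \<in> zfuns 2 N" "Bv f = Bv g"
  shows "f = g"
proof
  fix x
  have e: "f 0 = g 0" "f 1 = g 1" using assms(3) unfolding Bv_def by (auto simp: doubleton_eq_iff)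
  show "f x = g x"
  proof (cases "x < 2")
    case True
    then have "x = 0 \<or> x = 1" by auto
    then show ?thesis using e by auto
  next
    case False
    then show ?thesis using assms(1,2) unfolding zfuns_def by (auto simp: PiE_def extensional_def)
  qed
qed

lemma bv_cases: "w \<in> Bv f \<Longrightarrow> w = (0, f 0) \<or> w = (1, f 1)"
  by (auto simp: Bv_def)

lemma pth_tail: "pth \<sigma> v (w # ws) \<Longrightarrow> ws \<noteq> [] \<Longrightarrow> pth \<sigma> v ws"
  unfolding pth_def by (auto; metis Suc_less_eq nth_Cons_Suc)

lemma reach_step:
  assumes "lnk \<sigma> u w" and R: "\<forall>f\<in>\<sigma>. w \<in> Bv f \<longrightarrow> f \<in> G_component \<sigma> v"
  shows "\<forall>f\<in>\<sigma>. u \<in> Bv f \<longrightarrow> f \<in> G_component \<sigma> v"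
proof (intro ballI impI)
  fix f assume f: "f \<in> \<sigma>" "u \<in> Bv f"
  obtain g where g: "g \<in> \<sigma>" "Bv g = {u, w}" using assms(1) unfolding lnk_def by blast
  have gc: "(G_adj \<sigma>)\<^sup>*\<^sup>* v g" using R g unfolding G_component_def by auto
  show "f \<in> G_component \<sigma> v"
  proof (cases "f = g")
    case True then show ?thesis using gc unfolding G_component_def by simp
  next
    case False
    then have "G_adj \<sigma> g f" using adj_iff f g by auto
    then show ?thesis using gc unfolding G_component_def by (simp add: rtranclp.rtrancl_into_rtrancl)
  qed
qed

lemma reach_base:
  assumes "v \<in> \<sigma>"
  shows "\<forall>f\<in>\<sigma>. (0, v 0) \<in> Bv f \<longrightarrow> f \<in> G_component \<sigma> v"
proof (intro ballI impI)
  fix f assume f: "f \<in> \<sigma>" "(0, v 0) \<in> Bv f"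
  show "f \<in> G_component \<sigma> v"
  proof (cases "f = v")
    case True then show ?thesis unfolding G_component_def by simp
  next
    case False
    then have "G_adj \<sigma> v f" using adj_iff f assms by (auto simp: Bv_def)
    then show ?thesis unfolding G_component_def by auto
  qed
qed

lemma pth_reach:
  assumes "v \<in> \<sigma>"
  shows "pth \<sigma> v ws \<Longrightarrow> w \<in> set ws \<Longrightarrow> (\<forall>f\<in>\<sigma>. w \<in> Bv f \<longrightarrow> f \<in> G_component \<sigma> v)"
proof (induction ws arbitrary: w)
  case Nil then show ?case by simp
next
  case (Cons x ws)
  show ?case
  proof (cases "ws = []")
    case True
    then have "w = (0, v 0)" using Cons.prems unfolding pth_def by auto
    then show ?thesis using reach_base[OF assms] by simp
  next
    case False
    have p: "pth \<sigma> v ws" using pth_tail[OF Cons.prems(1) False] .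
    show ?thesis
    proof (cases "w = x")
      case True
      have "lnk \<sigma> ((x # ws)!0) ((x # ws)!Suc 0)" using Cons.prems(1) False unfolding pth_def by auto
      then have l: "lnk \<sigma> x (hd ws)" using False by (simp add: hd_conv_nth)
      have "hd ws \<in> set ws" using False by simp
      then show ?thesis using reach_step[OF l] Cons.IH[OF p] True by blast
    next
      case False2: False
      then show ?thesis using Cons.IH[OF p] Cons.prems by auto
    qed
  qed
qed

theorem theorem6:
  fixes N :: nat and \<sigma> :: "(nat \<Rightarrow> nat) set"
  assumes "N \<ge> 2"
    and "\<sigma> \<subseteq> zfuns 2 N"
    and "finite \<sigma>"
    and "totally_indistinguishable 2 \<sigma>"
  shows "\<forall>v\<in>\<sigma>. \<exists>cs. G_induced_cycle \<sigma> cs \<and> set cs \<subseteq> G_component \<sigma> v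
            \<and> even (length cs) \<and> length cs \<ge> 4"
proof
  fix v assume v: "v \<in> \<sigma>"
  define V where "V = (\<Union>f\<in>\<sigma>. Bv f)"
  have fV: "finite V" unfolding V_def using assms(3) by (simp add: Bv_def)
  have inj: "\<And>f g. f \<in> \<sigma> \<Longrightarrow> g \<in> \<sigma> \<Longrightarrow> Bv f = Bv g \<Longrightarrow> f = g"
    using bv_inj assms(2) by blast
  have p0: "pth \<sigma> v [(1, v 1), (0, v 0)]"
    unfolding pth_def lnk_def using v by (auto simp: Bv_def)
  have bnd: "\<forall>ws. pth \<sigma> v ws \<longrightarrow> length ws < card V + 1"
  proof (intro allI impI)
    fix ws assume "pth \<sigma> v ws"
    then have "distinct ws" "set ws \<subseteq> V" unfolding pth_def V_def by auto
    then have "length ws \<le> card V" using fV by (metis card_mono distinct_card)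
    then show "length ws < card V + 1" by simp
  qed
  obtain ws where ws: "pth \<sigma> v ws" and mx: "\<And>ys. pth \<sigma> v ys \<Longrightarrow> length ys \<le> length ws"
    using ex_has_greatest_nat[of "pth \<sigma> v", OF p0 bnd] by blast
  have l2: "length ws \<ge> 2"
  proof (rule ccontr)
    assume "\<not> length ws \<ge> 2"
    then have "length ws \<le> 1" by simp
    then show False using mx[OF p0] by simp
  qed
  have wsd: "distinct ws" and wsV: "set ws \<subseteq> V"
    and wsl: "\<And>i. Suc i < length ws \<Longrightarrow> lnk \<sigma> (ws!i) (ws!Suc i)"
    and wsne: "ws \<noteq> []" and wslast: "last ws = (0, v 0)"
    using ws unfolding pth_def V_def by auto
  define w where "w = ws!0"
  define w2 where "w2 = ws!1"
  obtain g where g: "g \<in> \<sigma>" "Bv g = {w, w2}" using wsl[of 0] l2 unfolding lnk_def w_def w2_def by auto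
  have "ws!0 \<in> set ws" using wsne by simp
  then have "w \<in> V" using wsV w_def by auto
  then obtain f where f: "f \<in> \<sigma>" "w \<in> Bv f" unfolding V_def by auto
  obtain x where x: "x < 2" "w = (x, f x)" using bv_cases[OF f(2)] by fastforce
  obtain f' where f': "f' \<in> \<sigma>" "f' \<noteq> f" "f' x = f x"
    using assms(4) x(1) f(1) unfolding totally_indistinguishable_def by fastforce
  have "x = 0 \<or> x = 1" using x(1) by auto
  then have wf': "w \<in> Bv f'" using x f' by (auto simp: Bv_def)
  obtain h where h: "h \<in> \<sigma>" "h \<noteq> g" "w \<in> Bv h"
    using f f' wf' by metis
  obtain w' where w': "Bv h = {w, w'}" "w' \<noteq> w"
    using h(3) unfolding Bv_def by auto
  have w'2: "w' \<noteq> w2"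
  proof
    assume "w' = w2"
    then have "Bv h = Bv g" using w' g by simp
    then show False using inj h g by blast
  qed
  have w'in: "w' \<in> set ws"
  proof (rule ccontr)
    assume nin: "w' \<notin> set ws"
    have hd: "ws!0 = w" using w_def by simp
    have "pth \<sigma> v (w' # ws)"
      unfolding pth_def
    proof (intro conjI allI impI)
      show "distinct (w' # ws)" using nin wsd by simp
      show "w' # ws \<noteq> []" by simp
      show "last (w' # ws) = (0, v 0)" using wsne wslast by simp
      show "set (w' # ws) \<subseteq> (\<Union>f\<in>\<sigma>. Bv f)" using wsV h w' unfolding V_def by auto
      fix i assume i: "Suc i < length (w' # ws)"
      show "lnk \<sigma> ((w' # ws) ! i) ((w' # ws) ! Suc i)"
      proof (cases i)
        case 0
        then show ?thesis using h w' hd unfolding lnk_def by (auto simp: insert_commute)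
      next
        case (Suc k)
        then show ?thesis using wsl[of k] i by simp
      qed
    qed
    then show False using mx by fastforce
  qed
  then obtain j where j: "j < length ws" "ws!j = w'" by (metis in_set_conv_nth)
  have j0: "j \<noteq> 0"
  proof
    assume "j = 0"
    then have "w' = w" using j(2) w_def by simp
    then show False using w'(2) by simp
  qed
  have j1: "j \<noteq> 1"
  proof
    assume "j = 1"
    then have "w' = w2" using j(2) w2_def by simp
    then show False using w'2 by simp
  qed
  define s where "s = take (Suc j) ws"
  have sl: "length s = Suc j" using j s_def by simp
  have snth: "\<And>i. i \<le> j \<Longrightarrow> s!i = ws!i" using s_def by simp
  have sd: "distinct s" using wsd s_def by simp
  have s3: "length s \<ge> 3" using sl j0 j1 by simp
  have ex: "\<forall>i<Suc j. \<exists>f\<in>\<sigma>. Bv f = {s!i, s!(Suc i mod Suc j)}"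
  proof (intro allI impI)
    fix i assume i: "i < Suc j"
    show "\<exists>f\<in>\<sigma>. Bv f = {s!i, s!(Suc i mod Suc j)}"
    proof (cases "i < j")
      case True
      then have "lnk \<sigma> (ws!i) (ws!Suc i)" using wsl j by simp
      then show ?thesis using True snth by (simp add: lnk_def)
    next
      case False
      then have "i = j" using i by simp
      then show ?thesis using h w' snth j w_def by (auto simp: insert_commute)
    qed
  qed
  define F where "F i = (SOME f. f \<in> \<sigma> \<and> Bv f = {s!i, s!(Suc i mod Suc j)})" for i
  have F: "\<And>i. i < Suc j \<Longrightarrow> F i \<in> \<sigma> \<and> Bv (F i) = {s!i, s!(Suc i mod Suc j)}"
  proof -
    fix i assume "i < Suc j"
    then have "\<exists>f. f \<in> \<sigma> \<and> Bv f = {s!i, s!(Suc i mod Suc j)}" using ex by blast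
    then show "F i \<in> \<sigma> \<and> Bv (F i) = {s!i, s!(Suc i mod Suc j)}" unfolding F_def by (rule someI_ex)
  qed
  define cs where "cs = map F [0..<Suc j]"
  have csl: "length cs = length s" using sl cs_def by simp
  have csm: "set cs \<subseteq> \<sigma>" using F cs_def by auto
  have csb: "\<forall>i<length s. Bv (cs!i) = {s!i, s!(Suc i mod length s)}"
    using F sl cs_def by (simp del: upt_Suc)
  have C: "G_induced_cycle \<sigma> cs \<and> even (length cs)" using cyc[OF sd s3 csl csm csb] .
  have comp: "set cs \<subseteq> G_component \<sigma> v"
  proof
    fix c assume "c \<in> set cs"
    then obtain i where i: "i < Suc j" "c = F i" using cs_def by (auto simp del: upt_Suc)
    have "i < length ws" using i j by simp
    then have "s!i \<in> set ws" using snth i by simp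
    moreover have "s!i \<in> Bv c" "c \<in> \<sigma>" using F i by auto
    ultimately show "c \<in> G_component \<sigma> v" using pth_reach[OF v ws] by blast
  qed
  have "length cs \<noteq> 3" using C by auto
  then have "length cs \<ge> 4" using csl s3 by simp
  then show "\<exists>cs. G_induced_cycle \<sigma> cs \<and> set cs \<subseteq> G_component \<sigma> v
            \<and> even (length cs) \<and> length cs \<ge> 4" using C comp by blast
qed

end
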